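(* Let $d\in\{1,2,3,7,11\}$, $K=\mathbb{Q}(\sqrt{-d})$, $\mathcal{O}_d$ its ring of integers, $\Delta$ a positive integer not of the form $\beta\bar\beta$ with $\beta\in\mathcal{O}_d$, $k\ge1$ odd, and $$P_{k,\Delta}(z,\bar z)=\sum_{\substack{(a,b,c)\in\mathbb{Z}\times\mathcal{O}_d\times\mathbb{Z}\\ b\bar b-ac=\Delta,\ c<0<a}}\left(az\bar z+bz+\bar b\bar z+c\right)^k .$$ Let $\varepsilon=\begin{psmallmatrix}-1&0\\0&1\end{psmallmatrix}$, $S=\begin{psmallmatrix}0&-1\\1&0\end{psmallmatrix}$, $T=\begin{psmallmatrix}1&1\\0&1\end{psmallmatrix}$. Then: (1) $P_{k,\Delta}(\bar z,z)=P_{k,\Delta}(z,\bar z)$; (2) $P_{k,\Delta}(uz,\bar u\bar z)=P_{k,\Delta}(z,\bar z)$ for every unit $u\in\mathcal{O}_d$; (3) $P_{k,\Delta}|(\mathbf{1}+S)=0$; (4) $P_{k,\Delta}|(\mathbf{1}+TS\varepsilon-T)=0$; (5) if $d=7$, then with $\omega=\frac{1+\sqrt{-7}}{2}$ and $T_\omega=\begin{psmallmatrix}1&\omega\\0&1\end{psmallmatrix}$, $$P_{k,\Delta}|(\mathbf{1}-T_\omega-ST^{-1}T_\omega S-TT_\omega^{-1}ST_\omega)=0.$$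
   Context: Polynomials are in the independent variables $z,\bar z$. For a polynomial $P(z,\bar z)$ of degree at most $k$ in each variable and $\gamma=\begin{psmallmatrix}a&b\\c&e\end{psmallmatrix}\in\mathbf{GL}(2,\mathbb{C})$, $(P|\gamma)(z,\bar z)=(cz+e)^k\overline{(cz+e)}^kP\!\left(\frac{az+b}{cz+e},\frac{\bar a\bar z+\bar b}{\bar c\bar z+\bar e}\right)$; this is a right action ($P|(\gamma_1\gamma_2)=(P|\gamma_1)|\gamma_2$) extended linearly to the group ring, $\mathbf{1}$ is the identity matrix. *)

theory Defs
  imports "HOL-Analysis.Analysis"
begin

definition mat2 :: "complex \<Rightarrow> complex \<Rightarrow> complex \<Rightarrow> complex \<Rightarrow> complex^2^2" where
  "mat2 a b c e = (\<chi> i j. if i = 1 then (if j = 1 then a else b) else (if j = 1 then c else e))"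

text \<open>Generator omega_d of the ring of integers of Q(sqrt(-d)) (d squarefree positive).\<close>
definition omega_d :: "nat \<Rightarrow> complex" where
  "omega_d d = (if d mod 4 = 3 then (1 + \<i> * of_real (sqrt (real d))) / 2
               else \<i> * of_real (sqrt (real d)))"

definition Od :: "nat \<Rightarrow> complex set" where
  "Od d = {of_int x + of_int y * omega_d d | x y. True}"

definition units_Od :: "nat \<Rightarrow> complex set" where
  "units_Od d = {u \<in> Od d. u \<noteq> 0 \<and> inverse u \<in> Od d}"

text \<open>Polynomials in the independent variables z, zbar are represented as functions of
  two complex variables (z, w), w playing the role of zbar.\<close>
definition Pidx :: "nat \<Rightarrow> int \<Rightarrow> (int \<times> complex \<times> int) set" where
  "Pidx d \<Delta> = {(a, b, c). b \<in> Od d \<and> b * cnj b - of_int a * of_int c = of_int \<Delta> \<and> c < 0 \<and> 0 < a}"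

definition Pk :: "nat \<Rightarrow> nat \<Rightarrow> int \<Rightarrow> complex \<Rightarrow> complex \<Rightarrow> complex" where
  "Pk d k \<Delta> z w =
     (\<Sum>(a, b, c) \<in> Pidx d \<Delta>. (of_int a * z * w + b * z + cnj b * w + of_int c) ^ k)"

text \<open>Slash action of weight (k,k); the formula is used at points where it is defined.\<close>
definition slash :: "nat \<Rightarrow> complex^2^2 \<Rightarrow> (complex \<Rightarrow> complex \<Rightarrow> complex) \<Rightarrow> complex \<Rightarrow> complex \<Rightarrow> complex" where
  "slash k g P z w =
     (let a = g$1$1; b = g$1$2; c = g$2$1; e = g$2$2 in
      (c * z + e) ^ k * (cnj c * w + cnj e) ^ k *
      P ((a * z + b) / (c * z + e)) ((cnj a * w + cnj b) / (cnj c * w + cnj e)))"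

definition regular_at :: "complex^2^2 \<Rightarrow> complex \<Rightarrow> complex \<Rightarrow> bool" where
  "regular_at g z w \<longleftrightarrow> g$2$1 * z + g$2$2 \<noteq> 0 \<and> cnj (g$2$1) * w + cnj (g$2$2) \<noteq> 0"

definition epsM :: "complex^2^2" where "epsM = mat2 (-1) 0 0 1"
definition SM :: "complex^2^2" where "SM = mat2 0 (-1) 1 0"
definition TM :: "complex^2^2" where "TM = mat2 1 1 0 1"
definition TMinv :: "complex^2^2" where "TMinv = mat2 1 (-1) 0 1"
definition Tw :: "complex \<Rightarrow> complex^2^2" where "Tw x = mat2 1 x 0 1"
definition Twinv :: "complex \<Rightarrow> complex^2^2" where "Twinv x = mat2 1 (-x) 0 1"

end

theory Submission
  imports Defs
begin


lemma mat2_nth[simp]: "mat2 a b c e $ 1 $ 1 = a" "mat2 a b c e $ 1 $ 2 = b"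
  "mat2 a b c e $ 2 $ 1 = c" "mat2 a b c e $ 2 $ 2 = e"
  by (simp_all add: mat2_def)

lemma mat2_mult: "mat2 a b c e ** mat2 a' b' c' e' =
  mat2 (a*a'+b*c') (a*b'+b*e') (c*a'+e*c') (c*b'+e*e')"
  by (simp add: vec_eq_iff forall_2 matrix_matrix_mult_def sum_2)

lemma slash_mat2: "slash k (mat2 a b c e) P z w =
  (c * z + e) ^ k * (cnj c * w + cnj e) ^ k *
      P ((a * z + b) / (c * z + e)) ((cnj a * w + cnj b) / (cnj c * w + cnj e))"
  by (simp add: slash_def Let_def)

lemma regular_mat2: "regular_at (mat2 a b c e) z w \<longleftrightarrow> c * z + e \<noteq> 0 \<and> cnj c * w + cnj e \<noteq> 0"
  by (simp add: regular_at_def)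


lemma Od_iff: "b \<in> Od d \<longleftrightarrow> (\<exists>x y::int. b = of_int x + of_int y * omega_d d)"
  by (auto simp: Od_def)

lemma omega_cnj: "cnj (omega_d d) = (if d mod 4 = 3 then 1 - omega_d d else - omega_d d)"
  by (auto simp: omega_d_def complex_eq_iff)

lemma omega_sq: "omega_d d * omega_d d =
   (if d mod 4 = 3 then omega_d d - of_int (int ((d+1) div 4)) else - of_nat d)"
proof -
  have s: "sqrt (real d) * sqrt (real d) = real d" by simp
  show ?thesis
  proof (cases "d mod 4 = 3")
    case True
    then have "real ((d+1) div 4) * 4 = real d + 1"
    proof -
      have "(d+1) div 4 * 4 = d + 1" using True by presburger
      then show ?thesis by (metis of_nat_1 of_nat_add of_nat_mult of_nat_numeral)
    qed
    then show ?thesis using True s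
      by (simp add: omega_d_def complex_eq_iff field_simps power2_eq_square)
  next
    case False
    then show ?thesis using s by (simp add: omega_d_def complex_eq_iff)
  qed
qed



lemma Od_of_int[simp]: "of_int n \<in> Od d"
  unfolding Od_iff by (rule exI[of _ n], rule exI[of _ 0]) simp

lemma Od_omega[simp]: "omega_d d \<in> Od d"
  unfolding Od_iff by (rule exI[of _ 0], rule exI[of _ 1]) simp

lemma Od_0[simp]: "0 \<in> Od d" and Od_1[simp]: "1 \<in> Od d"
  using Od_of_int[of 0 d] Od_of_int[of 1 d] by simp_all

lemma Od_add[simp]: assumes "a \<in> Od d" "b \<in> Od d" shows "a + b \<in> Od d"
proof -
  obtain x y u v where a: "a = of_int x + of_int y * omega_d d" and b: "b = of_int u + of_int v * omega_d d"
    using assms unfolding Od_iff by blast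
  show ?thesis unfolding Od_iff
    by (rule exI[of _ "x+u"], rule exI[of _ "y+v"]) (simp add: a b algebra_simps)
qed

lemma Od_uminus[simp]: assumes "a \<in> Od d" shows "- a \<in> Od d"
proof -
  obtain x y where a: "a = of_int x + of_int y * omega_d d"
    using assms unfolding Od_iff by blast
  show ?thesis unfolding Od_iff
    by (rule exI[of _ "-x"], rule exI[of _ "-y"]) (simp add: a algebra_simps)
qed

lemma Od_diff[simp]: assumes "a \<in> Od d" "b \<in> Od d" shows "a - b \<in> Od d"
  using Od_add[OF assms(1) Od_uminus[OF assms(2)]] by simp

lemma Od_mult[simp]: assumes "a \<in> Od d" "b \<in> Od d" shows "a * b \<in> Od d"
proof -
  obtain x y u v where a: "a = of_int x + of_int y * omega_d d" and b: "b = of_int u + of_int v * omega_d d"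
    using assms unfolding Od_iff by blast
  have e1: "a * b = of_int (x*u) + of_int (x* v + y*u) * omega_d d + of_int (y* v) * (omega_d d * omega_d d)"
    by (simp add: a b algebra_simps)
  show ?thesis
  proof (cases "d mod 4 = 3")
    case True
    let ?n = "int ((d+1) div 4)"
    have "a * b = of_int (x*u - y* v * ?n) + of_int (x* v + y*u + y* v) * omega_d d"
      unfolding e1 omega_sq using True by (simp add: algebra_simps)
    then show ?thesis unfolding Od_iff by blast
  next
    case False
    have "a * b = of_int (x*u - y* v * int d) + of_int (x* v + y*u) * omega_d d"
      unfolding e1 omega_sq using False by (simp add: algebra_simps)
    then show ?thesis unfolding Od_iff by blast
  qed
qed

lemma Od_cnj[simp]: assumes "a \<in> Od d" shows "cnj a \<in> Od d"
proof -
  obtain x y where a: "a = of_int x + of_int y * omega_d d"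
    using assms unfolding Od_iff by blast
  show ?thesis
  proof (cases "d mod 4 = 3")
    case True
    have "cnj a = of_int (x+y) + of_int (-y) * omega_d d"
      using True by (simp add: a omega_cnj algebra_simps)
    then show ?thesis unfolding Od_iff by blast
  next
    case False
    have "cnj a = of_int x + of_int (-y) * omega_d d"
      using False by (simp add: a omega_cnj algebra_simps)
    then show ?thesis unfolding Od_iff by blast
  qed
qed

lemma Od_Re2: assumes "a \<in> Od d" shows "2 * Re a \<in> \<int>"
proof -
  obtain x y where a: "a = of_int x + of_int y * omega_d d"
    using assms unfolding Od_iff by blast
  show ?thesis
  proof (cases "d mod 4 = 3")
    case True
    have "2 * Re a = of_int (2*x+y)" using True by (simp add: a omega_d_def)
    then show ?thesis by simp
  next
    case False
    have "2 * Re a = of_int (2*x)" using False by (simp add: a omega_d_def)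
    then show ?thesis by simp
  qed
qed

lemma omega_norm: "omega_d d * cnj (omega_d d) = (if d mod 4 = 3 then of_int (int ((d+1) div 4)) else of_nat d)"
  using omega_sq[of d] by (auto simp: omega_cnj algebra_simps)

lemma Od_norm: assumes "a \<in> Od d" shows "\<exists>n::int. a * cnj a = of_int n"
proof -
  obtain x y where a: "a = of_int x + of_int y * omega_d d"
    using assms unfolding Od_iff by blast
  have e: "a * cnj a = of_int (x*x) + of_int (x*y) * (omega_d d + cnj (omega_d d)) + of_int (y*y) * (omega_d d * cnj (omega_d d))"
    by (simp add: a algebra_simps)
  show ?thesis
  proof (cases "d mod 4 = 3")
    case True
    have "a * cnj a = of_int (x*x + x*y + y*y* int ((d+1) div 4))"
      unfolding e omega_norm using True by (simp add: omega_cnj)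
    then show ?thesis by blast
  next
    case False
    have "a * cnj a = of_int (x*x + y*y* int d)"
      unfolding e omega_norm using False by (simp add: omega_cnj)
    then show ?thesis by blast
  qed
qed



lemma telescope:
  fixes h :: "'a \<Rightarrow> complex" and U :: "'a set" and p q r :: "'a \<Rightarrow> real"
  assumes negU: "\<And>g. g \<in> U \<Longrightarrow> neg g \<in> U"
    and negneg: "\<And>g. g \<in> U \<Longrightarrow> neg (neg g) = g"
    and hneg: "\<And>g. g \<in> U \<Longrightarrow> h (neg g) = - h g"
    and pneg: "\<And>g. g \<in> U \<Longrightarrow> p (neg g) = - p g"
    and qneg: "\<And>g. g \<in> U \<Longrightarrow> q (neg g) = - q g"
    and rneg: "\<And>g. g \<in> U \<Longrightarrow> r (neg g) = - r g"
    and nz: "\<And>g. g \<in> U \<Longrightarrow> p g \<noteq> 0 \<and> q g \<noteq> 0 \<and> r g \<noteq> 0"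
    and f1: "finite {g\<in>U. p g > 0 \<and> q g < 0}"
    and f2: "finite {g\<in>U. q g > 0 \<and> r g < 0}"
  shows "sum h {g\<in>U. p g > 0 \<and> q g < 0} + sum h {g\<in>U. q g > 0 \<and> r g < 0}
       = sum h {g\<in>U. p g > 0 \<and> r g < 0}"
proof -
  define A1 where "A1 = {g\<in>U. p g > 0 \<and> q g < 0 \<and> r g < 0}"
  define X where "X = {g\<in>U. p g > 0 \<and> q g < 0 \<and> r g > 0}"
  define A2 where "A2 = {g\<in>U. p g > 0 \<and> q g > 0 \<and> r g < 0}"
  define Y where "Y = {g\<in>U. p g < 0 \<and> q g > 0 \<and> r g < 0}"
  have e1: "{g\<in>U. p g > 0 \<and> q g < 0} = A1 \<union> X" unfolding A1_def X_def using nz by force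
  have e2: "{g\<in>U. q g > 0 \<and> r g < 0} = A2 \<union> Y" unfolding A2_def Y_def using nz by force
  have e3: "{g\<in>U. p g > 0 \<and> r g < 0} = A1 \<union> A2" unfolding A1_def A2_def using nz by force
  have fA1: "finite A1" and fX: "finite X" using f1 e1 by auto
  have fA2: "finite A2" and fY: "finite Y" using f2 e2 by auto
  have d1: "A1 \<inter> X = {}" "A2 \<inter> Y = {}" "A1 \<inter> A2 = {}" unfolding A1_def A2_def X_def Y_def by auto
  have YX: "Y = neg ` X"
  proof
    show "Y \<subseteq> neg ` X"
    proof
      fix g assume g: "g \<in> Y"
      then have "neg g \<in> X" "g \<in> U" unfolding X_def Y_def using negU pneg qneg rneg by auto
      then show "g \<in> neg ` X" using negneg by (metis image_eqI)
    qed
    show "neg ` X \<subseteq> Y" unfolding X_def Y_def using negU pneg qneg rneg by auto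
  qed
  have injX: "inj_on neg X" unfolding X_def by (rule inj_on_inverseI[where g=neg]) (use negneg in auto)
  have sY: "sum h Y = - sum h X"
    unfolding YX sum.reindex[OF injX] using hneg unfolding X_def
    by (simp add: sum_negf[symmetric])
  show ?thesis
    unfolding e1 e2 e3 using fA1 fX fA2 fY d1 sY
    by (simp add: sum.union_disjoint)
qed



type_synonym tri = "real \<times> complex \<times> real"

definition Qf :: "tri \<Rightarrow> complex \<Rightarrow> complex \<Rightarrow> complex" where
  "Qf g z w = (case g of (A, B, C) \<Rightarrow> of_real A * z * w + B * z + cnj B * w + of_real C)"

definition Ud :: "nat \<Rightarrow> int \<Rightarrow> tri set" where
  "Ud d D = {(A, B, C). A \<in> \<int> \<and> C \<in> \<int> \<and> B \<in> Od d \<and> B * cnj B - of_real (A * C) = of_int D}"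

definition emb :: "int \<times> complex \<times> int \<Rightarrow> tri" where
  "emb g = (case g of (a, b, c) \<Rightarrow> (of_int a, b, of_int c))"

definition pinf :: "tri \<Rightarrow> real" where "pinf g = fst g"
definition p0 :: "tri \<Rightarrow> real" where "p0 g = snd (snd g)"

lemma Qf_simp[simp]: "Qf (A, B, C) z w = of_real A * z * w + B * z + cnj B * w + of_real C"
  by (simp add: Qf_def)

lemma emb_inj: "inj emb"
  by (rule injI) (auto simp: emb_def split: prod.splits)

lemma Pidx_emb: "emb ` Pidx d D = {g \<in> Ud d D. pinf g > 0 \<and> p0 g < 0}"
proof
  show "emb ` Pidx d D \<subseteq> {g \<in> Ud d D. pinf g > 0 \<and> p0 g < 0}"
    by (auto simp: emb_def Pidx_def Ud_def pinf_def p0_def)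
  show "{g \<in> Ud d D. pinf g > 0 \<and> p0 g < 0} \<subseteq> emb ` Pidx d D"
  proof
    fix g assume g: "g \<in> {g \<in> Ud d D. pinf g > 0 \<and> p0 g < 0}"
    obtain A B C where gg: "g = (A, B, C)" by (cases g) auto
    from g gg obtain a c where a: "A = of_int a" and c: "C = of_int c"
      unfolding Ud_def by (auto elim!: Ints_cases)
    have "(a, B, c) \<in> Pidx d D" using g gg a c by (auto simp: Pidx_def Ud_def pinf_def p0_def)
    moreover have "g = emb (a, B, c)" using gg a c by (simp add: emb_def)
    ultimately show "g \<in> emb ` Pidx d D" by blast
  qed
qed

lemma Pk_emb: "Pk d k D z w = (\<Sum>g\<in>{g \<in> Ud d D. pinf g > 0 \<and> p0 g < 0}. (Qf g z w) ^ k)"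
  unfolding Pidx_emb[symmetric] sum.reindex[OF inj_on_subset[OF emb_inj subset_UNIV]]
  unfolding Pk_def by (rule sum.cong) (auto simp: emb_def)

definition Tf :: "complex \<Rightarrow> complex \<Rightarrow> complex \<Rightarrow> complex \<Rightarrow> tri \<Rightarrow> complex \<Rightarrow> complex \<Rightarrow> complex" where
  "Tf a b c e g z w = (case g of (A, B, C) \<Rightarrow>
     of_real A * (a*z+b) * (cnj a * w + cnj b) + B * (a*z+b) * (cnj c * w + cnj e)
     + cnj B * (c*z+e) * (cnj a * w + cnj b) + of_real C * (c*z+e) * (cnj c * w + cnj e))"

lemma cancel_lemma:
  fixes X Y p q B A C :: complex
  assumes "X \<noteq> 0" "Y \<noteq> 0"
  shows "X * Y * (A * (p / X) * (q / Y) + B * (p / X) + B' * (q / Y) + C) =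
    A * p * q + B * p * Y + B' * X * q + C * X * Y"
  using assms by (simp add: field_simps)

lemma slash_Pk:
  assumes "c * z + e \<noteq> 0" "cnj c * w + cnj e \<noteq> 0"
  shows "slash k (mat2 a b c e) (Pk d k D) z w =
    (\<Sum>g\<in>{g \<in> Ud d D. pinf g > 0 \<and> p0 g < 0}. (Tf a b c e g z w) ^ k)"
  unfolding slash_mat2 Pk_emb sum_distrib_left
proof (rule sum.cong[OF refl])
  fix g :: tri
  obtain A B C where gg: "g = (A, B, C)" by (cases g) auto
  have "(c * z + e) * (cnj c * w + cnj e) *
      Qf g ((a * z + b) / (c * z + e)) ((cnj a * w + cnj b) / (cnj c * w + cnj e)) = Tf a b c e g z w"
    unfolding gg Tf_def Qf_simp prod.case by (rule cancel_lemma[OF assms])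
  then show "(c * z + e) ^ k * (cnj c * w + cnj e) ^ k *
      Qf g ((a * z + b) / (c * z + e)) ((cnj a * w + cnj b) / (cnj c * w + cnj e)) ^ k = Tf a b c e g z w ^ k"
    by (metis power_mult_distrib)
qed

lemma reindex_bij:
  assumes "\<And>g. g \<in> I1 \<Longrightarrow> phi g \<in> I2" "\<And>g. g \<in> I2 \<Longrightarrow> psi g \<in> I1"
    "\<And>g. g \<in> I1 \<Longrightarrow> psi (phi g) = g" "\<And>g. g \<in> I2 \<Longrightarrow> phi (psi g) = g"
    "\<And>g. g \<in> I1 \<Longrightarrow> F g = G (phi g)"
  shows "sum F I1 = sum G I2"
proof -
  have "bij_betw phi I1 I2" by (rule bij_betw_byWitness[where f'=psi]) (use assms in auto)
  then show ?thesis using sum.reindex_bij_betw[of phi I1 I2 G] assms(5) by simp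
qed

lemma units_norm: assumes "u \<in> units_Od d" shows "u * cnj u = 1"
proof -
  from assms have u: "u \<in> Od d" "u \<noteq> 0" "inverse u \<in> Od d" by (auto simp: units_Od_def)
  obtain n :: int where n: "u * cnj u = of_int n" using Od_norm[OF u(1)] by blast
  obtain m :: int where m: "inverse u * cnj (inverse u) = of_int m" using Od_norm[OF u(3)] by blast
  have i: "inverse u * cnj (inverse u) = inverse (u * cnj u)"
    by (simp add: complex_cnj_inverse inverse_mult_distrib)
  have nz: "u * cnj u \<noteq> 0" using u(2) by simp
  have "of_int (n * m) = (u * cnj u) * (inverse u * cnj (inverse u))" by (simp only: n m of_int_mult)
  also have "\<dots> = 1" unfolding i using nz by (rule right_inverse)
  finally have nm: "n * m = 1" by (metis of_int_eq_1_iff)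
  have "Re (u * cnj u) \<ge> 0" by (simp add: complex_mult_cnj)
  then have "n \<ge> 0" using n by simp
  then have "n = 1" using nm by (metis pos_zmult_eq_1_iff zero_less_mult_iff zero_less_one linorder_not_le order_le_less)
  then show ?thesis using n by simp
qed



lemma omega_Re: "Re (omega_d d) = (if d mod 4 = 3 then 1/2 else 0)"
  by (simp add: omega_d_def)

lemma omega_Im: "d \<ge> 1 \<Longrightarrow> Im (omega_d d) \<ge> 1/2"
proof -
  assume "d \<ge> 1"
  then have "sqrt (real d) \<ge> 1" by simp
  have "Im (omega_d d) = sqrt (real d) / 2 \<or> Im (omega_d d) = sqrt (real d)" by (simp add: omega_d_def)
  then show ?thesis
  proof
    assume "Im (omega_d d) = sqrt (real d) / 2" then show ?thesis using \<open>sqrt (real d) \<ge> 1\<close> by linarith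
  next
    assume "Im (omega_d d) = sqrt (real d)" then show ?thesis using \<open>sqrt (real d) \<ge> 1\<close> by linarith
  qed
qed

lemma Pidx_bound:
  assumes d: "d \<ge> 1" and D: "D > 0" and m: "(a, b, c) \<in> Pidx d D"
  shows "\<exists>x y. b = of_int x + of_int y * omega_d d \<and> 1 \<le> a \<and> a \<le> D \<and> -D \<le> c \<and> c \<le> -1
     \<and> -2*D \<le> x \<and> x \<le> 2*D \<and> -2*D \<le> y \<and> y \<le> 2*D"
proof -
  from m have bO: "b \<in> Od d" and disc: "b * cnj b - of_int a * of_int c = of_int D" and c: "c < 0" and a: "0 < a"
    by (auto simp: Pidx_def)
  obtain x y where b: "b = of_int x + of_int y * omega_d d" using bO unfolding Od_iff by blast
  have "complex_of_real ((cmod b)^2) = b * cnj b" by (simp add: complex_norm_square[symmetric])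
  with disc have "complex_of_real ((cmod b)^2) = of_int (D + a * c)" by (simp add: algebra_simps)
  then have nb: "(cmod b)^2 = of_int (D + a*c)" by (metis of_real_eq_iff of_real_of_int_eq)
  have ac: "a * c \<le> -a" using mult_left_mono[of c "-1" a] a c by simp
  have ac2: "a * c \<le> -1" using ac a by linarith
  have ca: "a * c \<le> c" using mult_right_mono_neg[of 1 a c] a c by simp
  have "(cmod b)^2 \<ge> 0" by simp
  then have "0 \<le> real_of_int (D + a * c)" using nb by simp
  then have "0 \<le> D + a * c" by (simp only: of_int_0_le_iff)
  then have aD: "a \<le> D" and cD: "-D \<le> c" using ac ca by linarith+
  have "D + a*c \<le> D" using ac2 by simp
  then have "real_of_int (D + a*c) \<le> real_of_int D" by (simp only: of_int_le_iff)
  then have "(cmod b)^2 \<le> real_of_int D" using nb by linarith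
  also have "\<dots> \<le> (real_of_int D)^2" using D by (simp add: power2_eq_square)
  finally have cb: "cmod b \<le> real_of_int D" by (rule power2_le_imp_le) (use D in simp)
  have Imb: "Im b = of_int y * Im (omega_d d)" by (simp add: b)
  have "\<bar>Im b\<bar> \<le> real_of_int D" using abs_Im_le_cmod[of b] cb by linarith
  then have "\<bar>of_int y\<bar> * Im (omega_d d) \<le> real_of_int D" using omega_Im[OF d] unfolding Imb
    by (simp add: abs_mult)
  moreover have "\<bar>real_of_int y\<bar> * (1/2) \<le> \<bar>of_int y\<bar> * Im (omega_d d)"
    using omega_Im[OF d] by (intro mult_left_mono) auto
  ultimately have ybd: "\<bar>real_of_int y\<bar> \<le> 2 * D" by linarith
  have Reb: "Re b = of_int x + of_int y * Re (omega_d d)" by (simp add: b)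
  have "\<bar>Re b\<bar> \<le> real_of_int D" using abs_Re_le_cmod[of b] cb by linarith
  moreover have "\<bar>of_int y * Re (omega_d d)\<bar> \<le> real_of_int D"
    using ybd unfolding omega_Re by (auto simp: abs_mult)
  ultimately have xbd: "\<bar>real_of_int x\<bar> \<le> 2 * D" unfolding Reb by linarith
  have "-2*D \<le> x \<and> x \<le> 2*D \<and> -2*D \<le> y \<and> y \<le> 2*D" using xbd ybd by linarith
  moreover have "1 \<le> a" "c \<le> -1" using a c by auto
  ultimately show ?thesis using b aD cD by blast
qed

lemma Pidx_finite: assumes "d \<ge> 1" "D > 0" shows "finite (Pidx d D)"
proof -
  let ?f = "\<lambda>(a, x, y, c). (a, of_int x + of_int y * omega_d d, c) :: int \<times> complex \<times> int"
  have "Pidx d D \<subseteq> ?f ` ({1..D} \<times> {-2*D..2*D} \<times> {-2*D..2*D} \<times> {-D..-1})"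
  proof
    fix g assume g: "g \<in> Pidx d D"
    obtain a b c where gg: "g = (a, b, c)" by (cases g) auto
    obtain x y where "b = of_int x + of_int y * omega_d d \<and> 1 \<le> a \<and> a \<le> D \<and> -D \<le> c \<and> c \<le> -1
     \<and> -2*D \<le> x \<and> x \<le> 2*D \<and> -2*D \<le> y \<and> y \<le> 2*D"
      using Pidx_bound[OF assms g[unfolded gg]] by blast
    then show "g \<in> ?f ` ({1..D} \<times> {-2*D..2*D} \<times> {-2*D..2*D} \<times> {-D..-1})"
      unfolding gg by (intro image_eqI[where x="(a, x, y, c)"]) auto
  qed
  then show ?thesis by (rule finite_subset) (intro finite_imageI finite_cartesian_product finite_atLeastAtMost_int)
qed



abbreviation P0 :: "nat \<Rightarrow> int \<Rightarrow> tri set" where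
  "P0 d D \<equiv> {g \<in> Ud d D. pinf g > 0 \<and> p0 g < 0}"

lemma part1: "Pk d k D w z = Pk d k D z w"
  unfolding Pk_emb
proof (rule reindex_bij[where phi="\<lambda>(A,B,C). (A, cnj B, C)" and psi="\<lambda>(A,B,C). (A, cnj B, C)"])
  fix g assume "g \<in> P0 d D"
  then show "(case g of (A, B, C) \<Rightarrow> (A, cnj B, C)) \<in> P0 d D"
    by (auto simp: Ud_def pinf_def p0_def mult.commute)
next
  fix g assume "g \<in> P0 d D"
  then show "(case g of (A, B, C) \<Rightarrow> (A, cnj B, C)) \<in> P0 d D"
    by (auto simp: Ud_def pinf_def p0_def mult.commute)
qed (auto simp: algebra_simps)

lemma part2: assumes u: "u \<in> units_Od d" shows "Pk d k D (u * z) (cnj u * w) = Pk d k D z w"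
  unfolding Pk_emb
proof (rule reindex_bij[where phi="\<lambda>(A,B,C). (A, B * u, C)" and psi="\<lambda>(A,B,C). (A, B * cnj u, C)"])
  have uu: "u * cnj u = 1" by (rule units_norm[OF u])
  have uO: "u \<in> Od d" using u by (simp add: units_Od_def)
  {
    fix g assume g: "g \<in> P0 d D"
    obtain A B C where gg: "g = (A, B, C)" by (cases g) auto
    have "B * u * (cnj B * cnj u) = B * cnj B * (u * cnj u)" by (simp add: algebra_simps)
    then have e: "B * u * (cnj B * cnj u) = B * cnj B" using uu by simp
    show "(case g of (A, B, C) \<Rightarrow> (A, B * u, C)) \<in> P0 d D"
      using g uO unfolding gg by (auto simp: Ud_def pinf_def p0_def e)
  next
    fix g assume g: "g \<in> P0 d D"
    obtain A B C where gg: "g = (A, B, C)" by (cases g) auto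
    have "B * cnj u * (cnj B * u) = B * cnj B * (u * cnj u)" by (simp add: algebra_simps)
    then have e: "B * cnj u * (cnj B * u) = B * cnj B" using uu by simp
    show "(case g of (A, B, C) \<Rightarrow> (A, B * cnj u, C)) \<in> P0 d D"
      using g uO unfolding gg by (auto simp: Ud_def pinf_def p0_def e)
  next
    fix g assume "g \<in> P0 d D"
    then show "(case case g of (A, B, C) \<Rightarrow> (A, B * u, C) of (A, B, C) \<Rightarrow> (A, B * cnj u, C)) = g"
      using uu by (cases g) (simp add: mult.assoc mult.commute[of "cnj u" u])
  next
    fix g assume "g \<in> P0 d D"
    then show "(case case g of (A, B, C) \<Rightarrow> (A, B * cnj u, C) of (A, B, C) \<Rightarrow> (A, B * u, C)) = g"
      using uu by (cases g) (simp add: mult.assoc mult.commute[of "cnj u" u])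
  next
    fix g assume "g \<in> P0 d D"
    have "Qf g (u * z) (cnj u * w) = Qf (case g of (A, B, C) \<Rightarrow> (A, B * u, C)) z w"
    proof -
      obtain A B C where gg: "g = (A, B, C)" by (cases g) auto
      have "of_real A * (u * z) * (cnj u * w) = of_real A * z * w * (u * cnj u)" by (simp add: algebra_simps)
      then show ?thesis unfolding gg using uu by (simp add: algebra_simps)
    qed
    then show "Qf g (u * z) (cnj u * w) ^ k = Qf (case g of (A, B, C) \<Rightarrow> (A, B * u, C)) z w ^ k" by simp
  }
qed

lemma odd_pow_neg: "odd k \<Longrightarrow> (- x :: complex) ^ k = - (x ^ k)"
  by (simp add: power_minus_odd)

lemma part3:
  assumes k: "odd k" and r: "regular_at SM z w"
  shows "Pk d k D z w + slash k SM (Pk d k D) z w = 0"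
proof -
  have r': "1 * z + 0 \<noteq> 0" "cnj 1 * w + cnj 0 \<noteq> 0" using r unfolding SM_def regular_mat2 by auto
  have "slash k SM (Pk d k D) z w = (\<Sum>g\<in>P0 d D. - ((Qf g z w) ^ k))"
    unfolding SM_def slash_Pk[OF r']
  proof (rule reindex_bij[where phi="\<lambda>(A,B,C). (-C, cnj B, -A)" and psi="\<lambda>(A,B,C). (-C, cnj B, -A)"])
    fix g assume "g \<in> P0 d D"
    then show "(case g of (A, B, C) \<Rightarrow> (-C, cnj B, -A)) \<in> P0 d D"
      by (auto simp: Ud_def pinf_def p0_def algebra_simps)
  next
    fix g assume "g \<in> P0 d D"
    then show "(case g of (A, B, C) \<Rightarrow> (-C, cnj B, -A)) \<in> P0 d D"
      by (auto simp: Ud_def pinf_def p0_def algebra_simps)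
  next
    fix g assume "g \<in> P0 d D"
    obtain A B C where gg: "g = (A, B, C)" by (cases g) auto
    have "Tf 0 (-1) 1 0 g z w = - Qf (case g of (A, B, C) \<Rightarrow> (-C, cnj B, -A)) z w"
      unfolding gg Tf_def by (simp add: algebra_simps)
    then show "Tf 0 (-1) 1 0 g z w ^ k = - (Qf (case g of (A, B, C) \<Rightarrow> (-C, cnj B, -A)) z w ^ k)"
      using odd_pow_neg[OF k] by simp
  qed auto
  then show ?thesis unfolding Pk_emb by (simp add: sum_negf)
qed



definition negt :: "tri \<Rightarrow> tri" where "negt g = (case g of (A, B, C) \<Rightarrow> (-A, -B, -C))"
definition pm1 :: "tri \<Rightarrow> real" where "pm1 g = (case g of (A, B, C) \<Rightarrow> A - 2 * Re B + C)"

lemma of_real_Re: "complex_of_real (Re x) = (x + cnj x) / 2"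
  by (simp add: complex_eq_iff)

lemma Ints_Od: "A \<in> \<int> \<Longrightarrow> complex_of_real A \<in> Od d"
  by (auto elim!: Ints_cases)

lemma UdI: "A \<in> \<int> \<Longrightarrow> C \<in> \<int> \<Longrightarrow> B \<in> Od d \<Longrightarrow> B * cnj B - of_real A * of_real C = of_int D \<Longrightarrow> (A, B, C) \<in> Ud d D"
  by (simp add: Ud_def)

lemma UdD: "(A, B, C) \<in> Ud d D \<Longrightarrow> A \<in> \<int> \<and> C \<in> \<int> \<and> B \<in> Od d \<and> B * cnj B - of_real A * of_real C = of_int D"
  by (simp add: Ud_def)

lemma Ud_neg: "g \<in> Ud d D \<Longrightarrow> negt g \<in> Ud d D"
  by (auto simp: Ud_def negt_def)

lemma Qf_neg: "odd k \<Longrightarrow> Qf (negt g) z w ^ k = - (Qf g z w ^ k)"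
  by (cases g) (simp add: negt_def power_minus_odd[symmetric] algebra_simps)

lemma nz_pinf: assumes "\<forall>\<beta>\<in>Od d. \<beta> * cnj \<beta> \<noteq> of_int D" "g \<in> Ud d D" shows "pinf g \<noteq> 0"
  using assms by (cases g) (auto simp: Ud_def pinf_def)

lemma nz_p0: assumes "\<forall>\<beta>\<in>Od d. \<beta> * cnj \<beta> \<noteq> of_int D" "g \<in> Ud d D" shows "p0 g \<noteq> 0"
  using assms by (cases g) (auto simp: Ud_def p0_def)

lemma nz_pm1: assumes nrm: "\<forall>\<beta>\<in>Od d. \<beta> * cnj \<beta> \<noteq> of_int D" and g: "g \<in> Ud d D" shows "pm1 g \<noteq> 0"
proof
  assume z: "pm1 g = 0"
  obtain A B C where gg: "g = (A, B, C)" by (cases g) auto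
  note u = UdD[OF g[unfolded gg]]
  have r: "A - 2 * Re B + C = 0" using z gg by (simp add: pm1_def)
  have r2: "2 * Re B = A + C" using r by linarith
  have h: "B + cnj B = of_real (A + C)" by (simp only: complex_add_cnj r2)
  have "(B - of_real A) * cnj (B - of_real A) = B * cnj B - of_real A * (B + cnj B) + of_real A * of_real A"
    by (simp add: algebra_simps)
  also have "\<dots> = B * cnj B - of_real A * of_real C" unfolding h by (simp add: algebra_simps)
  finally have "(B - of_real A) * cnj (B - of_real A) = B * cnj B - of_real A * of_real C" .
  then have "(B - of_real A) * cnj (B - of_real A) = of_int D" using u by simp
  moreover have "B - of_real A \<in> Od d" using u Ints_Od by auto
  ultimately show False using nrm by blast
qed



lemma Ud_trans:
  assumes "(A, B, C) \<in> Ud d D" "A' \<in> \<int>" "C' \<in> \<int>" "B' \<in> Od d"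
    "B' * cnj B' - of_real A' * of_real C' = B * cnj B - of_real A * of_real C"
  shows "(A', B', C') \<in> Ud d D"
  using assms by (simp add: Ud_def)

lemma bij_finite:
  assumes "\<And>g. g \<in> I1 \<Longrightarrow> phi g \<in> I2" "\<And>g. g \<in> I2 \<Longrightarrow> psi g \<in> I1"
    "\<And>g. g \<in> I2 \<Longrightarrow> phi (psi g) = g" "finite I1"
  shows "finite I2"
proof -
  have "I2 \<subseteq> phi ` I1" using assms by (metis image_eqI subsetI)
  then show ?thesis using assms(4) finite_subset by blast
qed

lemma Re2_Ints: "B \<in> Od d \<Longrightarrow> 2 * Re B \<in> \<int>" by (rule Od_Re2)

lemma P0_finite: assumes "d \<ge> 1" "D > 0" shows "finite (P0 d D)"
  using Pidx_finite[OF assms] unfolding Pidx_emb[symmetric] by simp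

definition phi2 :: "tri \<Rightarrow> tri" where "phi2 g = (case g of (A,B,C) \<Rightarrow> (A + 2*Re B + C, of_real A + cnj B, A))"
definition psi2 :: "tri \<Rightarrow> tri" where "psi2 g = (case g of (A,B,C) \<Rightarrow> (C, cnj B - of_real C, A + C - 2*Re B))"
definition phi3 :: "tri \<Rightarrow> tri" where "phi3 g = (case g of (A,B,C) \<Rightarrow> (A, of_real A + B, A + 2*Re B + C))"
definition psi3 :: "tri \<Rightarrow> tri" where "psi3 g = (case g of (A,B,C) \<Rightarrow> (A, B - of_real A, C + A - 2*Re B))"

abbreviation I2 where "I2 d D \<equiv> {g \<in> Ud d D. p0 g > 0 \<and> pm1 g < 0}"
abbreviation I3 where "I3 d D \<equiv> {g \<in> Ud d D. pinf g > 0 \<and> pm1 g < 0}"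

lemma phi2_mem: "g \<in> P0 d D \<Longrightarrow> phi2 g \<in> I2 d D"
proof -
  assume g: "g \<in> P0 d D"
  obtain A B C where gg: "g = (A, B, C)" by (cases g) auto
  note u = UdD[of A B C d D]
  have m: "(A, B, C) \<in> Ud d D" using g gg by simp
  have "(A + 2*Re B + C, of_real A + cnj B, A) \<in> Ud d D"
    by (rule Ud_trans[OF m]) (use u[OF m] Ints_Od Re2_Ints in \<open>auto simp: of_real_Re algebra_simps\<close>)
  then show ?thesis using g gg by (simp add: phi2_def pinf_def p0_def pm1_def)
qed

lemma psi2_mem: "g \<in> I2 d D \<Longrightarrow> psi2 g \<in> P0 d D"
proof -
  assume g: "g \<in> I2 d D"
  obtain A B C where gg: "g = (A, B, C)" by (cases g) auto
  note u = UdD[of A B C d D]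
  have m: "(A, B, C) \<in> Ud d D" using g gg by simp
  have "(C, cnj B - of_real C, A + C - 2*Re B) \<in> Ud d D"
    by (rule Ud_trans[OF m]) (use u[OF m] Ints_Od Re2_Ints in \<open>auto simp: of_real_Re algebra_simps\<close>)
  then show ?thesis using g gg by (simp add: psi2_def pinf_def p0_def pm1_def)
qed

lemma phi3_mem: "g \<in> P0 d D \<Longrightarrow> phi3 g \<in> I3 d D"
proof -
  assume g: "g \<in> P0 d D"
  obtain A B C where gg: "g = (A, B, C)" by (cases g) auto
  note u = UdD[of A B C d D]
  have m: "(A, B, C) \<in> Ud d D" using g gg by simp
  have "(A, of_real A + B, A + 2*Re B + C) \<in> Ud d D"
    by (rule Ud_trans[OF m]) (use u[OF m] Ints_Od Re2_Ints in \<open>auto simp: of_real_Re algebra_simps\<close>)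
  then show ?thesis using g gg by (simp add: phi3_def pinf_def p0_def pm1_def)
qed

lemma psi3_mem: "g \<in> I3 d D \<Longrightarrow> psi3 g \<in> P0 d D"
proof -
  assume g: "g \<in> I3 d D"
  obtain A B C where gg: "g = (A, B, C)" by (cases g) auto
  note u = UdD[of A B C d D]
  have m: "(A, B, C) \<in> Ud d D" using g gg by simp
  have "(A, B - of_real A, C + A - 2*Re B) \<in> Ud d D"
    by (rule Ud_trans[OF m]) (use u[OF m] Ints_Od Re2_Ints in \<open>auto simp: of_real_Re algebra_simps\<close>)
  then show ?thesis using g gg by (simp add: psi3_def pinf_def p0_def pm1_def)
qed

lemma psi2_phi2: "psi2 (phi2 g) = g" by (cases g) (simp add: phi2_def psi2_def)
lemma phi2_psi2: "phi2 (psi2 g) = g" by (cases g) (simp add: phi2_def psi2_def)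
lemma psi3_phi3: "psi3 (phi3 g) = g" by (cases g) (simp add: phi3_def psi3_def)
lemma phi3_psi3: "phi3 (psi3 g) = g" by (cases g) (simp add: phi3_def psi3_def)

lemma Tf2: "Tf (-1) (-1) (-1) 0 g z w = Qf (phi2 g) z w"
  by (cases g) (simp add: Tf_def phi2_def of_real_Re algebra_simps)

lemma Tf3: "Tf 1 1 0 1 g z w = Qf (phi3 g) z w"
  by (cases g) (simp add: Tf_def phi3_def of_real_Re algebra_simps)

lemma part4:
  assumes d1: "d \<ge> 1" and D: "D > 0" and nrm: "\<forall>\<beta>\<in>Od d. \<beta> * cnj \<beta> \<noteq> of_int D"
    and k: "odd k" and r: "regular_at (TM ** SM ** epsM) z w"
  shows "Pk d k D z w + slash k (TM ** SM ** epsM) (Pk d k D) z w - slash k TM (Pk d k D) z w = 0"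
proof -
  have M2: "TM ** SM ** epsM = mat2 (-1) (-1) (-1) 0" by (simp add: TM_def SM_def epsM_def mat2_mult)
  have r2: "(-1) * z + 0 \<noteq> 0" "cnj (-1) * w + cnj 0 \<noteq> 0" using r unfolding M2 regular_mat2 by auto
  have rT: "0 * z + 1 \<noteq> (0::complex)" "cnj 0 * w + cnj 1 \<noteq> (0::complex)" by simp_all
  have S2: "slash k (TM ** SM ** epsM) (Pk d k D) z w = (\<Sum>g\<in>I2 d D. Qf g z w ^ k)"
    unfolding M2 slash_Pk[OF r2]
    by (rule reindex_bij[where phi=phi2 and psi=psi2, OF phi2_mem psi2_mem])
       (auto simp: psi2_phi2 phi2_psi2 Tf2)
  have S3: "slash k TM (Pk d k D) z w = (\<Sum>g\<in>I3 d D. Qf g z w ^ k)"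
    unfolding TM_def slash_Pk[OF rT]
    by (rule reindex_bij[where phi=phi3 and psi=psi3, OF phi3_mem psi3_mem])
       (auto simp: psi3_phi3 phi3_psi3 Tf3)
  have f1: "finite (P0 d D)" by (rule P0_finite[OF d1 D])
  have f2: "finite (I2 d D)"
    by (rule bij_finite[where phi=phi2 and psi=psi2, OF phi2_mem psi2_mem _ f1]) (auto simp: phi2_psi2)
  have T: "(\<Sum>g\<in>P0 d D. Qf g z w ^ k) + (\<Sum>g\<in>I2 d D. Qf g z w ^ k) = (\<Sum>g\<in>I3 d D. Qf g z w ^ k)"
    by (rule telescope[where neg=negt, OF _ _ _ _ _ _ _ f1 f2])
       (auto simp: Ud_neg Qf_neg[OF k] nz_pinf[OF nrm] nz_p0[OF nrm] nz_pm1[OF nrm],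
        auto simp: negt_def pinf_def p0_def pm1_def split: prod.splits)
  show ?thesis unfolding S2 S3 Pk_emb T[symmetric] by simp
qed



abbreviation om where "om \<equiv> omega_d 7"
lemma om7_cnj: "cnj om = 1 - om" by (simp add: omega_cnj)
lemma om7_sq: "om * om = om - 2" by (simp add: omega_sq)

lemmas csimps = of_real_add of_real_diff of_real_mult of_real_minus of_real_numeral of_real_1 of_real_0
  of_real_Re complex_cnj_add complex_cnj_mult complex_cnj_diff complex_cnj_minus complex_cnj_cnj
  complex_cnj_complex_of_real complex_cnj_numeral complex_cnj_one complex_cnj_zero om7_cnj

definition pmw :: "tri \<Rightarrow> real" where "pmw g = (case g of (A, B, C) \<Rightarrow> 2*A - 2*Re (B * om) + C)"
definition ph :: "tri \<Rightarrow> real" where "ph g = (case g of (A, B, C) \<Rightarrow> A - 2*Re (B * om) + 2*C)"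

definition phi4 :: "tri \<Rightarrow> tri" where "phi4 g = (case g of (A,B,C) \<Rightarrow>
  (A, B + of_real A * cnj om, 2*A + 2*Re (B * om) + C))"
definition psi4 :: "tri \<Rightarrow> tri" where "psi4 g = (case g of (A,B,C) \<Rightarrow>
  (A, B - of_real A * cnj om, C + 2*A - 2*Re (B * om)))"
definition phi5 :: "tri \<Rightarrow> tri" where "phi5 g = (case g of (A,B,C) \<Rightarrow>
  (A + 2*Re (B * om) + 2*C, B + of_real C * cnj om, C))"
definition psi5 :: "tri \<Rightarrow> tri" where "psi5 g = (case g of (A,B,C) \<Rightarrow>
  (A - 2*Re (B * om) + 2*C, B - of_real C * cnj om, C))"
definition phi6 :: "tri \<Rightarrow> tri" where "phi6 g = (case g of (A,B,C) \<Rightarrow>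
  (2*A + 2*Re (B * cnj om) + C, of_real A * cnj om + B * cnj om * cnj om + cnj B + of_real C * cnj om,
   A + 2*Re (B * cnj om) + 2*C))"
definition psi6 :: "tri \<Rightarrow> tri" where "psi6 g = (case g of (A,B,C) \<Rightarrow>
  (2*A - 2*Re (B * om) + C, cnj B + B * om * om - (of_real A + of_real C) * om, A - 2*Re (B * om) + 2*C))"

lemma triple_eqI: "complex_of_real A' = of_real A \<Longrightarrow> B' = B \<Longrightarrow> complex_of_real C' = of_real C \<Longrightarrow> (A',B',C') = (A,B,C)"
  by simp

lemma real_eqI: "complex_of_real x = complex_of_real y \<Longrightarrow> x = y" by simp

lemma psi4_phi4: "psi4 (phi4 g) = g"
proof -
  obtain A B C where gg: "g = (A, B, C)" by (cases g) auto
  show ?thesis unfolding gg phi4_def psi4_def prod.case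
    by (rule triple_eqI; (simp only: csimps)?; (use om7_sq in algebra | simp))
qed
lemma phi4_psi4: "phi4 (psi4 g) = g"
proof -
  obtain A B C where gg: "g = (A, B, C)" by (cases g) auto
  show ?thesis unfolding gg phi4_def psi4_def prod.case
    by (rule triple_eqI; (simp only: csimps)?; (use om7_sq in algebra | simp))
qed
lemma psi5_phi5: "psi5 (phi5 g) = g"
proof -
  obtain A B C where gg: "g = (A, B, C)" by (cases g) auto
  show ?thesis unfolding gg phi5_def psi5_def prod.case
    by (rule triple_eqI; (simp only: csimps)?; (use om7_sq in algebra | simp))
qed
lemma phi5_psi5: "phi5 (psi5 g) = g"
proof -
  obtain A B C where gg: "g = (A, B, C)" by (cases g) auto
  show ?thesis unfolding gg phi5_def psi5_def prod.case
    by (rule triple_eqI; (simp only: csimps)?; (use om7_sq in algebra | simp))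
qed
lemma psi6_phi6: "psi6 (phi6 g) = g"
proof -
  obtain A B C where gg: "g = (A, B, C)" by (cases g) auto
  show ?thesis unfolding gg phi6_def psi6_def prod.case
    by (rule triple_eqI; (simp only: csimps)?; (use om7_sq in algebra | simp))
qed
lemma phi6_psi6: "phi6 (psi6 g) = g"
proof -
  obtain A B C where gg: "g = (A, B, C)" by (cases g) auto
  show ?thesis unfolding gg phi6_def psi6_def prod.case
    by (rule triple_eqI; (simp only: csimps)?; (use om7_sq in algebra | simp))
qed


lemma phi4_mem_aux:
  assumes m: "(A, B, C) \<in> Ud 7 D"
  shows "(A, B + of_real A * cnj om, 2*A + 2*Re (B * om) + C) \<in> Ud 7 D"
proof -
  note u = UdD[OF m]
  have iA: "A \<in> \<int>" and iC: "C \<in> \<int>" and bO: "B \<in> Od 7" using u by auto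
  have r1: "2 * Re (B * om) \<in> \<int>" by (rule Re2_Ints[where d=7]) (simp add: bO)
  have r2: "2 * Re (B * cnj om) \<in> \<int>" by (rule Re2_Ints[where d=7]) (simp add: bO)
  have oA: "complex_of_real A \<in> Od 7" and oC: "complex_of_real C \<in> Od 7" using iA iC Ints_Od by auto
  show ?thesis
    apply (rule Ud_trans[OF m])
    subgoal by (intro r1 r2 iA iC Ints_numeral Ints_add Ints_diff Ints_mult)
    subgoal by (intro r1 r2 iA iC Ints_numeral Ints_add Ints_diff Ints_mult)
    subgoal using bO oA oC by simp
    subgoal by ((simp only: csimps)?; (use om7_sq in algebra | simp))
    done
qed

lemma phi4i_mem_aux:
  assumes m: "(A, B, C) \<in> Ud 7 D"
  shows "(A, B - of_real A * cnj om, C + 2*A - 2*Re (B * om)) \<in> Ud 7 D"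
proof -
  note u = UdD[OF m]
  have iA: "A \<in> \<int>" and iC: "C \<in> \<int>" and bO: "B \<in> Od 7" using u by auto
  have r1: "2 * Re (B * om) \<in> \<int>" by (rule Re2_Ints[where d=7]) (simp add: bO)
  have r2: "2 * Re (B * cnj om) \<in> \<int>" by (rule Re2_Ints[where d=7]) (simp add: bO)
  have oA: "complex_of_real A \<in> Od 7" and oC: "complex_of_real C \<in> Od 7" using iA iC Ints_Od by auto
  show ?thesis
    apply (rule Ud_trans[OF m])
    subgoal by (intro r1 r2 iA iC Ints_numeral Ints_add Ints_diff Ints_mult)
    subgoal by (intro r1 r2 iA iC Ints_numeral Ints_add Ints_diff Ints_mult)
    subgoal using bO oA oC by simp
    subgoal by ((simp only: csimps)?; (use om7_sq in algebra | simp))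
    done
qed

lemma phi5_mem_aux:
  assumes m: "(A, B, C) \<in> Ud 7 D"
  shows "(A + 2*Re (B * om) + 2*C, B + of_real C * cnj om, C) \<in> Ud 7 D"
proof -
  note u = UdD[OF m]
  have iA: "A \<in> \<int>" and iC: "C \<in> \<int>" and bO: "B \<in> Od 7" using u by auto
  have r1: "2 * Re (B * om) \<in> \<int>" by (rule Re2_Ints[where d=7]) (simp add: bO)
  have r2: "2 * Re (B * cnj om) \<in> \<int>" by (rule Re2_Ints[where d=7]) (simp add: bO)
  have oA: "complex_of_real A \<in> Od 7" and oC: "complex_of_real C \<in> Od 7" using iA iC Ints_Od by auto
  show ?thesis
    apply (rule Ud_trans[OF m])
    subgoal by (intro r1 r2 iA iC Ints_numeral Ints_add Ints_diff Ints_mult)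
    subgoal by (intro r1 r2 iA iC Ints_numeral Ints_add Ints_diff Ints_mult)
    subgoal using bO oA oC by simp
    subgoal by ((simp only: csimps)?; (use om7_sq in algebra | simp))
    done
qed

lemma phi5i_mem_aux:
  assumes m: "(A, B, C) \<in> Ud 7 D"
  shows "(A - 2*Re (B * om) + 2*C, B - of_real C * cnj om, C) \<in> Ud 7 D"
proof -
  note u = UdD[OF m]
  have iA: "A \<in> \<int>" and iC: "C \<in> \<int>" and bO: "B \<in> Od 7" using u by auto
  have r1: "2 * Re (B * om) \<in> \<int>" by (rule Re2_Ints[where d=7]) (simp add: bO)
  have r2: "2 * Re (B * cnj om) \<in> \<int>" by (rule Re2_Ints[where d=7]) (simp add: bO)
  have oA: "complex_of_real A \<in> Od 7" and oC: "complex_of_real C \<in> Od 7" using iA iC Ints_Od by auto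
  show ?thesis
    apply (rule Ud_trans[OF m])
    subgoal by (intro r1 r2 iA iC Ints_numeral Ints_add Ints_diff Ints_mult)
    subgoal by (intro r1 r2 iA iC Ints_numeral Ints_add Ints_diff Ints_mult)
    subgoal using bO oA oC by simp
    subgoal by ((simp only: csimps)?; (use om7_sq in algebra | simp))
    done
qed

lemma phi6_mem_aux:
  assumes m: "(A, B, C) \<in> Ud 7 D"
  shows "(2*A + 2*Re (B * cnj om) + C, of_real A * cnj om + B * cnj om * cnj om + cnj B + of_real C * cnj om, A + 2*Re (B * cnj om) + 2*C) \<in> Ud 7 D"
proof -
  note u = UdD[OF m]
  have iA: "A \<in> \<int>" and iC: "C \<in> \<int>" and bO: "B \<in> Od 7" using u by auto
  have r1: "2 * Re (B * om) \<in> \<int>" by (rule Re2_Ints[where d=7]) (simp add: bO)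
  have r2: "2 * Re (B * cnj om) \<in> \<int>" by (rule Re2_Ints[where d=7]) (simp add: bO)
  have oA: "complex_of_real A \<in> Od 7" and oC: "complex_of_real C \<in> Od 7" using iA iC Ints_Od by auto
  show ?thesis
    apply (rule Ud_trans[OF m])
    subgoal by (intro r1 r2 iA iC Ints_numeral Ints_add Ints_diff Ints_mult)
    subgoal by (intro r1 r2 iA iC Ints_numeral Ints_add Ints_diff Ints_mult)
    subgoal using bO oA oC by simp
    subgoal by ((simp only: csimps)?; (use om7_sq in algebra | simp))
    done
qed

lemma phi6i_mem_aux:
  assumes m: "(A, B, C) \<in> Ud 7 D"
  shows "(2*A - 2*Re (B * om) + C, cnj B + B * om * om - (of_real A + of_real C) * om, A - 2*Re (B * om) + 2*C) \<in> Ud 7 D"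
proof -
  note u = UdD[OF m]
  have iA: "A \<in> \<int>" and iC: "C \<in> \<int>" and bO: "B \<in> Od 7" using u by auto
  have r1: "2 * Re (B * om) \<in> \<int>" by (rule Re2_Ints[where d=7]) (simp add: bO)
  have r2: "2 * Re (B * cnj om) \<in> \<int>" by (rule Re2_Ints[where d=7]) (simp add: bO)
  have oA: "complex_of_real A \<in> Od 7" and oC: "complex_of_real C \<in> Od 7" using iA iC Ints_Od by auto
  show ?thesis
    apply (rule Ud_trans[OF m])
    subgoal by (intro r1 r2 iA iC Ints_numeral Ints_add Ints_diff Ints_mult)
    subgoal by (intro r1 r2 iA iC Ints_numeral Ints_add Ints_diff Ints_mult)
    subgoal using bO oA oC by simp
    subgoal by ((simp only: csimps)?; (use om7_sq in algebra | simp))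
    done
qed

abbreviation I4 where "I4 D \<equiv> {g \<in> Ud 7 D. pinf g > 0 \<and> pmw g < 0}"
abbreviation I5 where "I5 D \<equiv> {g \<in> Ud 7 D. ph g > 0 \<and> p0 g < 0}"
abbreviation I6 where "I6 D \<equiv> {g \<in> Ud 7 D. pmw g > 0 \<and> ph g < 0}"
abbreviation I46 where "I46 D \<equiv> {g \<in> Ud 7 D. pinf g > 0 \<and> ph g < 0}"

lemma phi4_mem: "g \<in> P0 7 D \<Longrightarrow> phi4 g \<in> I4 D"
proof -
  assume g: "g \<in> P0 7 D"
  obtain A B C where gg: "g = (A, B, C)" by (cases g) auto
  have "pmw (phi4 g) = C" unfolding gg pmw_def phi4_def prod.case by (rule real_eqI; (simp only: csimps)?; (use om7_sq in algebra | simp))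
  then show ?thesis using g phi4_mem_aux[of A B C D] unfolding gg by (simp add: phi4_def pinf_def p0_def)
qed
lemma psi4_mem: "g \<in> I4 D \<Longrightarrow> psi4 g \<in> P0 7 D"
proof -
  assume g: "g \<in> I4 D"
  obtain A B C where gg: "g = (A, B, C)" by (cases g) auto
  have "p0 (psi4 g) = pmw g" unfolding gg pmw_def psi4_def p0_def prod.case snd_conv by (rule real_eqI; (simp only: csimps)?; (use om7_sq in algebra | simp))
  then show ?thesis using g phi4i_mem_aux[of A B C D] unfolding gg by (simp add: psi4_def pinf_def)
qed
lemma phi5_mem: "g \<in> P0 7 D \<Longrightarrow> phi5 g \<in> I5 D"
proof -
  assume g: "g \<in> P0 7 D"
  obtain A B C where gg: "g = (A, B, C)" by (cases g) auto
  have "ph (phi5 g) = A" unfolding gg ph_def phi5_def prod.case by (rule real_eqI; (simp only: csimps)?; (use om7_sq in algebra | simp))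
  then show ?thesis using g phi5_mem_aux[of A B C D] unfolding gg by (simp add: phi5_def pinf_def p0_def)
qed
lemma psi5_mem: "g \<in> I5 D \<Longrightarrow> psi5 g \<in> P0 7 D"
proof -
  assume g: "g \<in> I5 D"
  obtain A B C where gg: "g = (A, B, C)" by (cases g) auto
  have "pinf (psi5 g) = ph g" unfolding gg ph_def psi5_def pinf_def prod.case fst_conv by (rule real_eqI; (simp only: csimps)?; (use om7_sq in algebra | simp))
  then show ?thesis using g phi5i_mem_aux[of A B C D] unfolding gg by (simp add: psi5_def p0_def)
qed
lemma phi6_mem: "g \<in> P0 7 D \<Longrightarrow> phi6 g \<in> I6 D"
proof -
  assume g: "g \<in> P0 7 D"
  obtain A B C where gg: "g = (A, B, C)" by (cases g) auto
  have "pmw (phi6 g) = A" unfolding gg pmw_def phi6_def prod.case by (rule real_eqI; (simp only: csimps)?; (use om7_sq in algebra | simp))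
  moreover have "ph (phi6 g) = C" unfolding gg ph_def phi6_def prod.case by (rule real_eqI; (simp only: csimps)?; (use om7_sq in algebra | simp))
  ultimately show ?thesis using g phi6_mem_aux[of A B C D] unfolding gg by (simp add: phi6_def pinf_def p0_def)
qed
lemma psi6_mem: "g \<in> I6 D \<Longrightarrow> psi6 g \<in> P0 7 D"
proof -
  assume g: "g \<in> I6 D"
  obtain A B C where gg: "g = (A, B, C)" by (cases g) auto
  have "pinf (psi6 g) = pmw g" unfolding gg pmw_def psi6_def pinf_def prod.case fst_conv by (rule real_eqI; (simp only: csimps)?; (use om7_sq in algebra | simp))
  moreover have "p0 (psi6 g) = ph g" unfolding gg ph_def psi6_def p0_def prod.case snd_conv by (rule real_eqI; (simp only: csimps)?; (use om7_sq in algebra | simp))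
  ultimately show ?thesis using g phi6i_mem_aux[of A B C D] unfolding gg by (simp add: psi6_def)
qed

lemma Tf4: "Tf 1 om 0 1 g z w = Qf (phi4 g) z w"
proof -
  obtain A B C where gg: "g = (A, B, C)" by (cases g) auto
  show ?thesis unfolding gg Tf_def phi4_def prod.case Qf_simp by ((simp only: csimps)?; (use om7_sq in algebra | simp))
qed
lemma Tf5: "Tf (-1) 0 (om - 1) (-1) g z w = Qf (phi5 g) z w"
proof -
  obtain A B C where gg: "g = (A, B, C)" by (cases g) auto
  show ?thesis unfolding gg Tf_def phi5_def prod.case Qf_simp by ((simp only: csimps)?; (use om7_sq in algebra | simp))
qed
lemma Tf6: "Tf (1 - om) 1 1 om g z w = Qf (phi6 g) z w"
proof -
  obtain A B C where gg: "g = (A, B, C)" by (cases g) auto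
  show ?thesis unfolding gg Tf_def phi6_def prod.case Qf_simp by ((simp only: csimps)?; (use om7_sq in algebra | simp))
qed


lemma nz_pmw: assumes nrm: "\<forall>\<beta>\<in>Od 7. \<beta> * cnj \<beta> \<noteq> of_int D" and g: "g \<in> Ud 7 D" shows "pmw g \<noteq> 0"
proof
  assume z: "pmw g = 0"
  obtain A B C where gg: "g = (A, B, C)" by (cases g) auto
  note u = UdD[OF g[unfolded gg]]
  have r2: "2 * Re (B * om) = 2 * A + C" using z gg by (simp add: pmw_def)
  have h0: "B * om + cnj (B * om) = of_real (2 * A + C)" by (simp only: complex_add_cnj r2)
  have h: "B * om + cnj B * (1 - om) = 2 * of_real A + of_real C" using h0 by (simp add: om7_cnj)
  have disc: "B * cnj B - of_real A * of_real C = of_int D" using u by simp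
  have "(B - of_real A * cnj om) * cnj (B - of_real A * cnj om) = of_int D"
    by ((simp only: csimps)?; use om7_sq h disc in algebra)
  moreover have "B - of_real A * cnj om \<in> Od 7" using u Ints_Od by auto
  ultimately show False using nrm by blast
qed

lemma nz_ph: assumes nrm: "\<forall>\<beta>\<in>Od 7. \<beta> * cnj \<beta> \<noteq> of_int D" and g: "g \<in> Ud 7 D" shows "ph g \<noteq> 0"
proof
  assume z: "ph g = 0"
  obtain A B C where gg: "g = (A, B, C)" by (cases g) auto
  note u = UdD[OF g[unfolded gg]]
  have r2: "2 * Re (B * om) = A + 2 * C" using z gg by (simp add: ph_def)
  have h0: "B * om + cnj (B * om) = of_real (A + 2 * C)" by (simp only: complex_add_cnj r2)
  have h: "B * om + cnj B * (1 - om) = of_real A + 2 * of_real C" using h0 by (simp add: om7_cnj)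
  have disc: "B * cnj B - of_real A * of_real C = of_int D" using u by simp
  have "(B - of_real C * cnj om) * cnj (B - of_real C * cnj om) = of_int D"
    by ((simp only: csimps)?; use om7_sq h disc in algebra)
  moreover have "B - of_real C * cnj om \<in> Od 7" using u Ints_Od by auto
  ultimately show False using nrm by blast
qed

lemma mat2_cong: "a = a' \<Longrightarrow> b = b' \<Longrightarrow> c = c' \<Longrightarrow> e = e' \<Longrightarrow> mat2 a b c e = mat2 a' b' c' e'"
  by simp

lemma M2eq: "SM ** TMinv ** Tw om ** SM = mat2 (-1) 0 (om - 1) (-1)"
  unfolding SM_def TMinv_def Tw_def mat2_mult
  by (rule mat2_cong; (simp; fail)?; (use om7_sq in algebra))

lemma M3eq: "TM ** Twinv om ** SM ** Tw om = mat2 (1 - om) 1 1 om"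
  unfolding TM_def Twinv_def SM_def Tw_def mat2_mult
  by (rule mat2_cong; (simp; fail)?; (use om7_sq in algebra))

lemma pmw_neg: "pmw (negt g) = - pmw g" by (cases g) (simp add: pmw_def negt_def)
lemma ph_neg: "ph (negt g) = - ph g" by (cases g) (simp add: ph_def negt_def)
lemma pinf_neg: "pinf (negt g) = - pinf g" by (cases g) (simp add: pinf_def negt_def)
lemma p0_neg: "p0 (negt g) = - p0 g" by (cases g) (simp add: p0_def negt_def)
lemma negt_negt: "negt (negt g) = g" by (cases g) (simp add: negt_def)



lemma part5:
  assumes D: "D > 0" and nrm: "\<forall>\<beta>\<in>Od 7. \<beta> * cnj \<beta> \<noteq> of_int D"
    and k: "odd k"
    and rg2: "regular_at (SM ** TMinv ** Tw om ** SM) z w"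
    and rg3: "regular_at (TM ** Twinv om ** SM ** Tw om) z w"
  shows "Pk 7 k D z w - slash k (Tw om) (Pk 7 k D) z w
            - slash k (SM ** TMinv ** Tw om ** SM) (Pk 7 k D) z w
            - slash k (TM ** Twinv om ** SM ** Tw om) (Pk 7 k D) z w = 0"
proof -
  have M1: "Tw om = mat2 1 om 0 1" by (simp add: Tw_def)
  have r1: "0 * z + 1 \<noteq> (0::complex)" "cnj 0 * w + cnj 1 \<noteq> (0::complex)" by simp_all
  have r2: "(om - 1) * z + (-1) \<noteq> 0" "cnj (om - 1) * w + cnj (-1) \<noteq> 0"
    using rg2 unfolding M2eq regular_mat2 by auto
  have r3: "1 * z + om \<noteq> 0" "cnj 1 * w + cnj om \<noteq> 0"
    using rg3 unfolding M3eq regular_mat2 by auto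
  have S4: "slash k (Tw om) (Pk 7 k D) z w = (\<Sum>g\<in>I4 D. Qf g z w ^ k)"
    unfolding M1 slash_Pk[OF r1]
    by (rule reindex_bij[where phi=phi4 and psi=psi4, OF phi4_mem psi4_mem])
       (auto simp: psi4_phi4 phi4_psi4 Tf4)
  have S5: "slash k (SM ** TMinv ** Tw om ** SM) (Pk 7 k D) z w = (\<Sum>g\<in>I5 D. Qf g z w ^ k)"
    unfolding M2eq slash_Pk[OF r2]
    by (rule reindex_bij[where phi=phi5 and psi=psi5, OF phi5_mem psi5_mem])
       (auto simp: psi5_phi5 phi5_psi5 Tf5)
  have S6: "slash k (TM ** Twinv om ** SM ** Tw om) (Pk 7 k D) z w = (\<Sum>g\<in>I6 D. Qf g z w ^ k)"
    unfolding M3eq slash_Pk[OF r3]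
    by (rule reindex_bij[where phi=phi6 and psi=psi6, OF phi6_mem psi6_mem])
       (auto simp: psi6_phi6 phi6_psi6 Tf6)
  have f0: "finite (P0 7 D)" by (rule P0_finite) (use D in auto)
  have f4: "finite (I4 D)"
    by (rule bij_finite[where phi=phi4 and psi=psi4, OF phi4_mem psi4_mem _ f0]) (auto simp: phi4_psi4)
  have f5: "finite (I5 D)"
    by (rule bij_finite[where phi=phi5 and psi=psi5, OF phi5_mem psi5_mem _ f0]) (auto simp: phi5_psi5)
  have f6: "finite (I6 D)"
    by (rule bij_finite[where phi=phi6 and psi=psi6, OF phi6_mem psi6_mem _ f0]) (auto simp: phi6_psi6)
  have f46: "finite (I46 D)"
  proof (rule finite_subset[of _ "I4 D \<union> I6 D"])
    show "I46 D \<subseteq> I4 D \<union> I6 D"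
    proof
      fix g assume g: "g \<in> I46 D"
      then have "pmw g \<noteq> 0" using nz_pmw[OF nrm] by blast
      then show "g \<in> I4 D \<union> I6 D" using g by (cases "pmw g < 0") auto
    qed
  qed (use f4 f6 in auto)
  have T1: "(\<Sum>g\<in>I4 D. Qf g z w ^ k) + (\<Sum>g\<in>I6 D. Qf g z w ^ k) = (\<Sum>g\<in>I46 D. Qf g z w ^ k)"
    by (rule telescope[where neg=negt, OF _ _ _ _ _ _ _ f4 f6])
       (auto simp: Ud_neg Qf_neg[OF k] nz_pinf[OF nrm] nz_pmw[OF nrm] nz_ph[OF nrm]
          pinf_neg pmw_neg ph_neg negt_negt)
  have T2: "(\<Sum>g\<in>I46 D. Qf g z w ^ k) + (\<Sum>g\<in>I5 D. Qf g z w ^ k) = (\<Sum>g\<in>P0 7 D. Qf g z w ^ k)"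
    by (rule telescope[where neg=negt, OF _ _ _ _ _ _ _ f46 f5])
       (auto simp: Ud_neg Qf_neg[OF k] nz_pinf[OF nrm] nz_p0[OF nrm] nz_ph[OF nrm]
          pinf_neg p0_neg ph_neg negt_negt)
  show ?thesis unfolding S4 S5 S6 Pk_emb T2[symmetric] T1[symmetric] by simp
qed


theorem proposition2p8:
  fixes d k :: nat and \<Delta> :: int
  assumes hd: "d \<in> {1, 2, 3, 7, 11}"
    and hDpos: "\<Delta> > 0"
    and hDnorm: "\<forall>\<beta> \<in> Od d. \<beta> * cnj \<beta> \<noteq> of_int \<Delta>"
    and hk: "odd k"
  shows "(\<forall>z w. Pk d k \<Delta> w z = Pk d k \<Delta> z w)
    \<and> (\<forall>u \<in> units_Od d. \<forall>z w. Pk d k \<Delta> (u * z) (cnj u * w) = Pk d k \<Delta> z w)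
    \<and> (\<forall>z w. regular_at SM z w \<longrightarrow>
          Pk d k \<Delta> z w + slash k SM (Pk d k \<Delta>) z w = 0)
    \<and> (\<forall>z w. regular_at (TM ** SM ** epsM) z w \<and> regular_at TM z w \<longrightarrow>
          Pk d k \<Delta> z w + slash k (TM ** SM ** epsM) (Pk d k \<Delta>) z w
            - slash k TM (Pk d k \<Delta>) z w = 0)
    \<and> (d = 7 \<longrightarrow>
        (\<forall>z w. regular_at (Tw (omega_d 7)) z w
            \<and> regular_at (SM ** TMinv ** Tw (omega_d 7) ** SM) z w
            \<and> regular_at (TM ** Twinv (omega_d 7) ** SM ** Tw (omega_d 7)) z w \<longrightarrow>
          Pk d k \<Delta> z w - slash k (Tw (omega_d 7)) (Pk d k \<Delta>) z w
            - slash k (SM ** TMinv ** Tw (omega_d 7) ** SM) (Pk d k \<Delta>) z w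
            - slash k (TM ** Twinv (omega_d 7) ** SM ** Tw (omega_d 7)) (Pk d k \<Delta>) z w = 0))"
proof -
  have d1: "d \<ge> 1" using hd by auto
  have c1: "\<forall>z w. Pk d k \<Delta> w z = Pk d k \<Delta> z w" using part1 by blast
  have c2: "\<forall>u \<in> units_Od d. \<forall>z w. Pk d k \<Delta> (u * z) (cnj u * w) = Pk d k \<Delta> z w"
    using part2 by blast
  have c3: "\<forall>z w. regular_at SM z w \<longrightarrow> Pk d k \<Delta> z w + slash k SM (Pk d k \<Delta>) z w = 0"
    using part3[OF hk] by blast
  have c4: "\<forall>z w. regular_at (TM ** SM ** epsM) z w \<and> regular_at TM z w \<longrightarrow>
          Pk d k \<Delta> z w + slash k (TM ** SM ** epsM) (Pk d k \<Delta>) z w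
            - slash k TM (Pk d k \<Delta>) z w = 0"
    using part4[OF d1 hDpos hDnorm hk] by blast
  have c5: "d = 7 \<longrightarrow>
        (\<forall>z w. regular_at (Tw (omega_d 7)) z w
            \<and> regular_at (SM ** TMinv ** Tw (omega_d 7) ** SM) z w
            \<and> regular_at (TM ** Twinv (omega_d 7) ** SM ** Tw (omega_d 7)) z w \<longrightarrow>
          Pk d k \<Delta> z w - slash k (Tw (omega_d 7)) (Pk d k \<Delta>) z w
            - slash k (SM ** TMinv ** Tw (omega_d 7) ** SM) (Pk d k \<Delta>) z w
            - slash k (TM ** Twinv (omega_d 7) ** SM ** Tw (omega_d 7)) (Pk d k \<Delta>) z w = 0)"
  proof (intro impI allI)
    fix z w assume d7: "d = 7" and r: "regular_at (Tw (omega_d 7)) z w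
            \<and> regular_at (SM ** TMinv ** Tw (omega_d 7) ** SM) z w
            \<and> regular_at (TM ** Twinv (omega_d 7) ** SM ** Tw (omega_d 7)) z w"
    show "Pk d k \<Delta> z w - slash k (Tw (omega_d 7)) (Pk d k \<Delta>) z w
            - slash k (SM ** TMinv ** Tw (omega_d 7) ** SM) (Pk d k \<Delta>) z w
            - slash k (TM ** Twinv (omega_d 7) ** SM ** Tw (omega_d 7)) (Pk d k \<Delta>) z w = 0"
      using part5[OF hDpos _ hk, of z w] hDnorm r unfolding d7 by blast
  qed
  show ?thesis using c1 c2 c3 c4 c5 by blast
qed

end
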